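(* Define $k:[0,1]\times[0,1]\to\mathbb{R}$ by $$k(s,t)=\sum_{j=1}^\infty \frac{(1-s^j)(1-t^j)}{j^2}.$$ Then $k$ is continuous on the whole closed unit square, i.e. $k\in C([0,1]\times[0,1])$. However, the first partial derivative of $k$ with respect to $s$, given for $0\le s<1$ and $0\le t\le 1$ by $\frac{\partial k(s,t)}{\partial s}=\sum_{j=1}^\infty \frac{-s^{j-1}(1-t^j)}{j}$, satisfies $$\lim_{s\to 1}\frac{\partial k(s,t)}{\partial s}=-\infty\quad\text{for every } 0\le t<1,$$ so $\frac{\partial k}{\partial s}$ does not extend to a function in $C([0,1]\times[0,1])$; in particular $k$ is not continuously differentiable on the closed unit square.
   Context: The function $k$ is the kernel of the integral operator $A^*A$ on $L^2(0,1)$, where $A=B^{(H)}\circ J:L^2(0,1)\to\ell^2$, $[Jx](s)=\int_0^s x(t)\,dt$ and $[B^{(H)}z]_j=\int_0^1 t^{j-1}z(t)\,dt$ for $j=1,2,\dots$; this background is not needed for the statement, which concerns only the explicitly defined series $k$. *)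

theory Defs
  imports "HOL-Analysis.Analysis"
begin

definition kser :: "real \<Rightarrow> real \<Rightarrow> real" where
  "kser s t = (\<Sum>n. (1 - s ^ (n+1)) * (1 - t ^ (n+1)) / (real (n+1))^2)"

definition dks :: "real \<Rightarrow> real \<Rightarrow> real" where
  "dks s t = (\<Sum>n. - (s ^ n) * (1 - t ^ (n+1)) / real (n+1))"

end

theory Submission
  imports Defs "HOL-Analysis.Analysis" "HOL-Real_Asymp.Real_Asymp"
begin

lemma summable_inv_sq: "summable (\<lambda>n. 1 / (real (n+1))^2)"
proof -
  have "summable (\<lambda>n. 1 / (real (Suc n))^2)"
    using summable_Suc_iff[where f="\<lambda>n. inverse ((real n)^2)"] inverse_power_summable[of 2]
    by (simp add: divide_inverse)
  then show ?thesis by simp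
qed

lemma part1: "continuous_on ({0..1} \<times> {0..1}) (\<lambda>(s, t). kser s t)"
proof -
  define f where "f = (\<lambda>i (p::real\<times>real). (1 - fst p^(i+1))*(1 - snd p^(i+1))/(real (i+1))^2)"
  have bnd: "norm (f n p) \<le> 1 / (real (n+1))^2" if "p \<in> {0..1} \<times> {0..1}" for n p
  proof -
    obtain s t where p: "p = (s,t)" by fastforce
    with that have st: "0 \<le> s" "s \<le> 1" "0 \<le> t" "t \<le> 1" by auto
    have "s^(n+1) \<le> 1" "t^(n+1) \<le> 1" "0 \<le> s^(n+1)" "0 \<le> t^(n+1)"
      using st by (auto intro!: power_le_one zero_le_power simp del: power_Suc)
    then have a: "0 \<le> 1 - s^(n+1)" "1 - s^(n+1) \<le> 1"
      and b: "0 \<le> 1 - t^(n+1)" "1 - t^(n+1) \<le> 1" by linarith+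
    have "(1 - s^(n+1))*(1 - t^(n+1)) \<le> 1" using a b by (simp add: mult_le_one)
    moreover have "0 \<le> (1 - s^(n+1))*(1 - t^(n+1))" using a b by simp
    ultimately show ?thesis unfolding f_def p
      by (simp add: abs_mult divide_right_mono)
  qed
  have ul: "uniform_limit ({0..1} \<times> {0..1}) (\<lambda>n x. \<Sum>i<n. f i x) (\<lambda>x. suminf (\<lambda>i. f i x)) sequentially"
    by (rule Weierstrass_m_test[OF bnd summable_inv_sq])
  have "continuous_on ({0..1} \<times> {0..1}) (\<lambda>x. suminf (\<lambda>i. f i x))"
  proof (rule uniform_limit_theorem[OF _ ul])
    show "\<forall>\<^sub>F n in sequentially. continuous_on ({0..1} \<times> {0..1}) (\<lambda>x. \<Sum>i<n. f i x)"
      unfolding f_def by (intro always_eventually allI continuous_intros) auto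
  qed simp
  moreover have "(\<lambda>x. suminf (\<lambda>i. f i x)) = (\<lambda>(s, t). kser s t)"
    by (auto simp: f_def kser_def fun_eq_iff)
  ultimately show ?thesis by (metis (no_types))
qed


lemma div_le_self_nat: "0 \<le> (a::real) \<Longrightarrow> a / real (n+1) \<le> a"
proof -
  assume a: "0 \<le> a"
  have "a / real (n+1) \<le> a / 1" by (rule divide_left_mono) (use a in auto)
  then show ?thesis by simp
qed

lemma part2:
  assumes s: "0 \<le> s" "s < 1" and t: "0 \<le> t" "t \<le> 1"
  shows "((\<lambda>x. kser x t) has_real_derivative dks s t) (at s within {0..1})"
proof -
  define r where "r = (1+s)/2"
  have r: "s < r" "r < 1" "0 < r" using s by (auto simp: r_def)
  define S where "S = {-r<..<r}"
  define f where "f = (\<lambda>n (x::real). (1 - x^(n+1))*(1 - t^(n+1))/(real (n+1))^2)"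
  define f' where "f' = (\<lambda>n (x::real). - (x^n) * (1 - t^(n+1)) / real (n+1))"
  have der: "(f n has_field_derivative f' n x) (at x within S)" for n x
  proof -
    define c where "c = (1 - t^(n+1)) / (real (n+1))^2"
    have d1: "((\<lambda>x. x^(n+1)) has_field_derivative real (n+1) * x^n) (at x within S)"
      using DERIV_pow[of "n+1" x S] by simp
    have d2: "((\<lambda>x. 1 - x^(n+1)) has_field_derivative 0 - real (n+1) * x^n) (at x within S)"
      by (rule DERIV_diff[OF DERIV_const d1])
    have d3: "((\<lambda>x. (1 - x^(n+1)) * c) has_field_derivative (0 - real (n+1) * x^n) * c) (at x within S)"
      by (rule DERIV_cmult_right[OF d2])
    have "f n = (\<lambda>x. (1 - x^(n+1)) * c)" by (simp add: f_def c_def fun_eq_iff)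
    moreover have "(0 - real (n+1) * x^n) * c = f' n x"
      unfolding f'_def c_def by (simp add: power2_eq_square field_simps del: of_nat_Suc)
    ultimately show ?thesis using d3 by simp
  qed
  have tb: "\<bar>1 - t^(n+1)\<bar> \<le> 1" for n
  proof -
    have "t^(n+1) \<le> 1" "0 \<le> t^(n+1)" using t by (auto intro!: power_le_one zero_le_power simp del: power_Suc)
    then show ?thesis by linarith
  qed
  have bnd: "norm (f' n x) \<le> r^n" if "x \<in> S" for n x
  proof -
    have "\<bar>x\<bar> \<le> r" using that by (auto simp: S_def)
    then have xr: "\<bar>x\<bar>^n \<le> r^n" by (simp add: power_mono)
    have "norm (f' n x) = \<bar>x\<bar>^n * \<bar>1 - t^(n+1)\<bar> / real (n+1)"
      by (simp add: f'_def abs_mult power_abs)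
    also have "\<dots> \<le> \<bar>x\<bar>^n * \<bar>1 - t^(n+1)\<bar>"
      by (rule div_le_self_nat) auto
    also have "\<dots> \<le> r^n * 1"
      by (rule mult_mono[OF xr tb]) (use r in auto)
    finally show ?thesis by simp
  qed
  have uc: "uniformly_convergent_on S (\<lambda>n x. \<Sum>i<n. f' i x)"
    by (rule Weierstrass_m_test'[OF bnd]) (use r in auto)
  have "summable (\<lambda>n. f n 0)"
  proof (rule summable_comparison_test'[OF summable_inv_sq])
    fix n :: nat
    show "norm (f n 0) \<le> 1 / (real (n+1))^2"
      using tb[of n] by (simp add: f_def abs_mult divide_right_mono del: of_nat_Suc)
  qed
  moreover have "convex S" by (simp add: S_def)
  moreover have "0 \<in> S" "s \<in> interior S" using r s by (auto simp: S_def)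
  ultimately have "((\<lambda>x. \<Sum>n. f n x) has_field_derivative (\<Sum>n. f' n s)) (at s)"
    using has_field_derivative_series'(2)[OF _ der uc] by blast
  moreover have "(\<lambda>x. \<Sum>n. f n x) = (\<lambda>x. kser x t)"
    by (simp add: f_def kser_def fun_eq_iff)
  moreover have "(\<Sum>n. f' n s) = dks s t"
    by (simp add: f'_def dks_def)
  ultimately show ?thesis
    by (metis has_field_derivative_at_within)
qed

lemma dks_bound:
  assumes s: "0 < s" "s < 1" and t: "0 \<le> t" "t < 1"
  shows "dks s t \<le> (1 - t) * ln (1 - s)"
proof -
  define a where "a = (\<lambda>n. - (s ^ n) * (1 - t ^ (n+1)) / real (n+1))"
  define b where "b = (\<lambda>n. (1 - t) * (- (s ^ (n+1)) / real (n+1)))"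
  have "(\<lambda>n. - ((- (-s))^n) / of_nat n) sums ln (1 + - s)"
    by (rule ln_series') (use s in auto)
  then have "(\<lambda>n. - (s^n) / real n) sums ln (1 - s)" by simp
  then have "(\<lambda>n. - (s^(Suc n)) / real (Suc n)) sums ln (1 - s)"
    by (subst sums_Suc_iff) simp
  then have bs: "b sums ((1 - t) * ln (1 - s))"
    unfolding b_def using sums_mult by fastforce
  have tn: "t^(n+1) \<le> t" "0 \<le> t^(n+1)" "t^(n+1) \<le> 1" for n
  proof -
    have "t^n \<le> 1" "0 \<le> t^n" using t by (auto intro!: power_le_one)
    then have "t^n * t \<le> t" using t by (intro mult_left_le_one_le) auto
    then show "t^(n+1) \<le> t" by (simp add: mult.commute)
    show "0 \<le> t^(n+1)" using t by simp
    show "t^(n+1) \<le> 1" using t \<open>t^(n+1) \<le> t\<close> by linarith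
  qed
  have asum: "summable a"
  proof (rule summable_comparison_test'[OF summable_geometric[of s]])
    fix n :: nat
    have "norm (a n) = s^n * \<bar>1 - t^(n+1)\<bar> / real (n+1)"
      using s by (simp add: a_def abs_mult)
    also have "\<dots> \<le> s^n * \<bar>1 - t^(n+1)\<bar>" by (rule div_le_self_nat) (use s in auto)
    also have "\<dots> \<le> s^n * 1" using tn[of n] s by (intro mult_left_mono) auto
    finally show "norm (a n) \<le> s^n" by simp
  qed (use s in auto)
  have le: "a n \<le> b n" for n
  proof -
    have "s^(n+1) \<le> s^n" using s by (simp add: mult_left_le_one_le)
    moreover have "1 - t \<le> 1 - t^(n+1)" using tn[of n] by linarith
    ultimately have "s^(n+1) * (1 - t) \<le> s^n * (1 - t^(n+1))"
      using s t by (intro mult_mono) auto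
    then have "s^(n+1) * (1 - t) / real (n+1) \<le> s^n * (1 - t^(n+1)) / real (n+1)"
      by (rule divide_right_mono) simp
    then show ?thesis by (simp add: a_def b_def field_simps)
  qed
  have "suminf a \<le> suminf b"
    by (rule suminf_le[OF le asum sums_summable[OF bs]])
  then show ?thesis using sums_unique[OF bs] by (simp add: dks_def a_def)
qed

lemma ev01: "\<forall>\<^sub>F x in at_left (1::real). x \<in> {0<..<1}"
  by (rule eventually_at_left_real) simp

lemma part3:
  assumes t: "0 \<le> t" "t < 1"
  shows "filterlim (\<lambda>s. dks s t) at_bot (at_left 1)"
proof (rule filterlim_at_bot_mono)
  have "filterlim (\<lambda>s::real. 1 - s) (at_right 0) (at_left 1)" by real_asymp
  then have L: "filterlim (\<lambda>s::real. ln (1 - s)) at_bot (at_left 1)"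
    using filterlim_compose[OF ln_at_0] by blast
  have "0 < 1 - t" using t by simp
  then show "filterlim (\<lambda>s. (1 - t) * ln (1 - s)) at_bot (at_left 1)"
    using filterlim_tendsto_pos_mult_at_bot[OF tendsto_const _ L] by blast
  show "\<forall>\<^sub>F x in at_left 1. dks x t \<le> (1 - t) * ln (1 - x)"
    using ev01 by eventually_elim (use dks_bound t in auto)
qed

lemma part4:
  "\<not> (\<exists>g :: real \<times> real \<Rightarrow> real. continuous_on ({0..1} \<times> {0..1}) g
           \<and> (\<forall>s\<in>{0..<1}. \<forall>t\<in>{0..1}. g (s, t) = dks s t))"
proof
  assume "\<exists>g :: real \<times> real \<Rightarrow> real. continuous_on ({0..1} \<times> {0..1}) g
           \<and> (\<forall>s\<in>{0..<1}. \<forall>t\<in>{0..1}. g (s, t) = dks s t)"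
  then obtain g :: "real \<times> real \<Rightarrow> real" where cg: "continuous_on ({0..1} \<times> {0..1}) g"
    and eq: "\<forall>s\<in>{0..<1}. \<forall>t\<in>{0..1}. g (s, t) = dks s t" by blast
  have "continuous_on {0..1} (\<lambda>s. g (s, 0))"
    by (rule continuous_on_compose2[OF cg]) (auto intro!: continuous_intros)
  then have lim: "((\<lambda>s. g (s, 0)) \<longlongrightarrow> g (1, 0)) (at_left 1)"
    by (rule continuous_on_Icc_at_leftD) simp
  have "filterlim (\<lambda>s. dks s 0) at_bot (at_left 1)" by (rule part3) auto
  moreover have "\<forall>\<^sub>F s in at_left 1. dks s 0 = g (s, 0)"
    using ev01 by eventually_elim (use eq in auto)
  ultimately have "filterlim (\<lambda>s. g (s, 0)) at_bot (at_left 1)"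
    using filterlim_cong[OF refl refl, of "\<lambda>s. dks s 0" "\<lambda>s. g (s, 0)" "at_left 1" at_bot] by blast
  then have "filterlim (\<lambda>s. g (s, 0)) at_infinity (at_left (1::real))"
    using at_bot_le_at_infinity filterlim_mono by blast
  then show False
    using not_tendsto_and_filterlim_at_infinity[OF _ lim] by simp
qed

theorem proposition2:
  shows "continuous_on ({0..1} \<times> {0..1}) (\<lambda>(s, t). kser s t)
    \<and> (\<forall>s\<in>{0..<1}. \<forall>t\<in>{0..1}.
         ((\<lambda>x. kser x t) has_real_derivative dks s t) (at s within {0..1}))
    \<and> (\<forall>t\<in>{0..<1}. filterlim (\<lambda>s. dks s t) at_bot (at_left 1))
    \<and> \<not> (\<exists>g :: real \<times> real \<Rightarrow> real. continuous_on ({0..1} \<times> {0..1}) g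
           \<and> (\<forall>s\<in>{0..<1}. \<forall>t\<in>{0..1}. g (s, t) = dks s t))"
  using part1 part2 part3 part4 by auto

end
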